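(* The trigonometric polynomial $f(\alpha,\beta,\gamma)=2^{3/2}-\cos(\alpha+\beta+\gamma)-\cos(-\alpha+\beta+\gamma)-\cos(\alpha-\beta+\gamma)+\cos(\alpha+\beta-\gamma)$ is extremal in the class $\sigma(1,1,1)$.
   Context: $\sigma(1,1,1)$ is the set of trigonometric polynomials $f(\alpha,\beta,\gamma)=\sum_{|k|,|\ell|,|m|\le1}q(k,\ell,m)e^{i(k\alpha+\ell\beta+m\gamma)}$ with $f(\alpha,\beta,\gamma)\ge0$ for all real $\alpha,\beta,\gamma$. An element $f$ of a convex cone $U$ is extremal in $U$ if whenever $f=g+h$ with $g,h\in U$, both $g$ and $h$ are nonnegative multiples of $f$. *)

theory Defs
  imports "HOL-Analysis.Analysis"
begin

definition trig111 :: "(int \<Rightarrow> int \<Rightarrow> int \<Rightarrow> complex) \<Rightarrow> real \<Rightarrow> real \<Rightarrow> real \<Rightarrow> complex" where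
  "trig111 q \<alpha> \<beta> \<gamma> =
     (\<Sum>k\<in>{-1..1}. \<Sum>l\<in>{-1..1}. \<Sum>m\<in>{-1..1}.
        q k l m * exp (\<i> * complex_of_real (of_int k * \<alpha> + of_int l * \<beta> + of_int m * \<gamma>)))"

text \<open>sigma(1,1,1): nonnegative trigonometric polynomials of degree (1,1,1).
Since its elements are nonnegative, they are real-valued; we represent them as
real-valued functions of three real variables.\<close>
definition sigma111 :: "(real \<Rightarrow> real \<Rightarrow> real \<Rightarrow> real) set" where
  "sigma111 = {f. (\<exists>q. \<forall>\<alpha> \<beta> \<gamma>. complex_of_real (f \<alpha> \<beta> \<gamma>) = trig111 q \<alpha> \<beta> \<gamma>)
                  \<and> (\<forall>\<alpha> \<beta> \<gamma>. f \<alpha> \<beta> \<gamma> \<ge> 0)}"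

definition extremal_in :: "(real \<Rightarrow> real \<Rightarrow> real \<Rightarrow> real) set \<Rightarrow> (real \<Rightarrow> real \<Rightarrow> real \<Rightarrow> real) \<Rightarrow> bool" where
  "extremal_in U f \<longleftrightarrow> f \<in> U \<and>
     (\<forall>g h. g \<in> U \<longrightarrow> h \<in> U \<longrightarrow> f = (\<lambda>\<alpha> \<beta> \<gamma>. g \<alpha> \<beta> \<gamma> + h \<alpha> \<beta> \<gamma>) \<longrightarrow>
        (\<exists>c\<ge>0. g = (\<lambda>\<alpha> \<beta> \<gamma>. c * f \<alpha> \<beta> \<gamma>)) \<and> (\<exists>d\<ge>0. h = (\<lambda>\<alpha> \<beta> \<gamma>. d * f \<alpha> \<beta> \<gamma>)))"

end

theory Submission
  imports Defs
begin

definition phi :: "nat \<Rightarrow> real \<Rightarrow> real" where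
  "phi i t = (if i = 0 then 1 else if i = 1 then sqrt 2 * cos t else sqrt 2 * sin t)"

definition dphi :: "nat \<Rightarrow> real \<Rightarrow> real" where
  "dphi i t = (if i = 0 then 0 else if i = 1 then - (sqrt 2 * sin t) else sqrt 2 * cos t)"

definition G :: "(nat \<Rightarrow> nat \<Rightarrow> nat \<Rightarrow> real) \<Rightarrow> real \<Rightarrow> real \<Rightarrow> real \<Rightarrow> real" where
  "G D a b d = (\<Sum>i<3. \<Sum>j<3. \<Sum>k<3. D i j k * phi i a * phi j b * phi k d)"

definition PB :: "(real \<Rightarrow> real \<Rightarrow> real \<Rightarrow> real) \<Rightarrow> bool" where
  "PB g \<longleftrightarrow> (\<exists>D. g = G D)"

definition L1 :: "(real \<Rightarrow> real) \<Rightarrow> bool" where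
  "L1 u \<longleftrightarrow> (\<exists>e. \<forall>t. u t = (\<Sum>i<3. e i * phi i t))"

lemma PB_add: "PB g \<Longrightarrow> PB h \<Longrightarrow> PB (\<lambda>a b d. g a b d + h a b d)"
  unfolding PB_def
proof (elim exE)
  fix D1 D2 assume "g = G D1" "h = G D2"
  then have "(\<lambda>a b d. g a b d + h a b d) = G (\<lambda>i j k. D1 i j k + D2 i j k)"
    by (auto simp: G_def sum.distrib algebra_simps intro!: ext)
  then show "\<exists>D. (\<lambda>a b d. g a b d + h a b d) = G D" by blast
qed

lemma PB_scale: "PB g \<Longrightarrow> PB (\<lambda>a b d. r * g a b d)"
  unfolding PB_def
proof (elim exE)
  fix D1 assume "g = G D1"
  then have "(\<lambda>a b d. r * g a b d) = G (\<lambda>i j k. r * D1 i j k)"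
    by (auto simp: G_def sum_distrib_left algebra_simps intro!: ext)
  then show "\<exists>D. (\<lambda>a b d. r * g a b d) = G D" by blast
qed

lemma PB_zero: "PB (\<lambda>a b d. 0)"
proof -
  have "(\<lambda>a b d. 0) = G (\<lambda>i j k. 0)" by (auto simp: G_def intro!: ext)
  then show ?thesis unfolding PB_def by blast
qed

lemma PB_sum: "finite S \<Longrightarrow> (\<And>x. x \<in> S \<Longrightarrow> PB (F x)) \<Longrightarrow> PB (\<lambda>a b d. \<Sum>x\<in>S. F x a b d)"
proof (induction S rule: finite_induct)
  case empty
  then show ?case using PB_zero by simp
next
  case (insert x S)
  then show ?case using PB_add[of "F x" "\<lambda>a b d. \<Sum>x\<in>S. F x a b d"] by simp
qed

lemma sum3: "(\<Sum>i<3. f i) = f 0 + f 1 + (f (2::nat) :: real)"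
  by (simp add: eval_nat_numeral)

lemma PB_prod: "L1 u \<Longrightarrow> L1 v \<Longrightarrow> L1 w \<Longrightarrow> PB (\<lambda>a b d. u a * v b * w d)"
  unfolding L1_def PB_def
proof (elim exE)
  fix e1 e2 e3
  assume 1: "\<forall>t. u t = (\<Sum>i<3. e1 i * phi i t)" and 2: "\<forall>t. v t = (\<Sum>i<3. e2 i * phi i t)"
    and 3: "\<forall>t. w t = (\<Sum>i<3. e3 i * phi i t)"
  have "(\<lambda>a b d. u a * v b * w d) = G (\<lambda>i j k. e1 i * e2 j * e3 k)"
    by (auto simp: 1 2 3 G_def sum3 algebra_simps intro!: ext)
  then show "\<exists>D. (\<lambda>a b d. u a * v b * w d) = G D" by blast
qed

lemma int_cases3: "(k::int) \<in> {-1..1} \<Longrightarrow> k = -1 \<or> k = 0 \<or> k = 1"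
  by auto

lemma L1_cos: "k \<in> {-1..1} \<Longrightarrow> L1 (\<lambda>t. cos (of_int k * t))"
  unfolding L1_def
proof -
  assume "k \<in> {-1..1}"
  then consider "k = -1" | "k = 0" | "k = 1" by fastforce
  then show "\<exists>e. \<forall>t. cos (of_int k * t) = (\<Sum>i<3. e i * phi i t)"
  proof cases
    case 2
    then show ?thesis by (intro exI[of _ "\<lambda>i. if i = 0 then 1 else 0"]) (simp add: sum3 phi_def)
  qed (intro exI[of _ "\<lambda>i. if i = 1 then 1 / sqrt 2 else 0"], simp add: sum3 phi_def)+
qed

lemma L1_sin: "k \<in> {-1..1} \<Longrightarrow> L1 (\<lambda>t. sin (of_int k * t))"
  unfolding L1_def
proof -
  assume "k \<in> {-1..1}"
  then consider "k = -1" | "k = 0" | "k = 1" by fastforce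
  then show "\<exists>e. \<forall>t. sin (of_int k * t) = (\<Sum>i<3. e i * phi i t)"
  proof cases
    case 1
    then show ?thesis by (intro exI[of _ "\<lambda>i. if i = 2 then - 1 / sqrt 2 else 0"]) (simp add: sum3 phi_def)
  next
    case 2
    then show ?thesis by (intro exI[of _ "\<lambda>i. 0"]) (simp add: sum3 phi_def)
  next
    case 3
    then show ?thesis by (intro exI[of _ "\<lambda>i. if i = 2 then 1 / sqrt 2 else 0"]) (simp add: sum3 phi_def)
  qed
qed

lemma cos3: "cos ((x::real) + y + z) = cos x * cos y * cos z + (- 1 * (cos x * sin y * sin z) +
   (- 1 * (sin x * cos y * sin z) + - 1 * (sin x * sin y * cos z)))"
  by (simp only: cos_add sin_add) (simp add: algebra_simps)

lemma sin3: "sin ((x::real) + y + z) = sin x * cos y * cos z + (cos x * sin y * cos z +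
   (cos x * cos y * sin z + - 1 * (sin x * sin y * sin z)))"
  by (simp only: cos_add sin_add) (simp add: algebra_simps)

lemma PB_cos_sin:
  assumes k: "k \<in> {-1..1}" and l: "l \<in> {-1..1}" and m: "m \<in> {-1..1}"
  shows "PB (\<lambda>a b d. cos (of_int k * a + of_int l * b + of_int m * d))"
    and "PB (\<lambda>a b d. sin (of_int k * a + of_int l * b + of_int m * d))"
proof -
  let ?ck = "\<lambda>t::real. cos (of_int k * t)" and ?sk = "\<lambda>t::real. sin (of_int k * t)"
  let ?cl = "\<lambda>t::real. cos (of_int l * t)" and ?sl = "\<lambda>t::real. sin (of_int l * t)"
  let ?cm = "\<lambda>t::real. cos (of_int m * t)" and ?sm = "\<lambda>t::real. sin (of_int m * t)"
  note L = L1_cos[OF k] L1_sin[OF k] L1_cos[OF l] L1_sin[OF l] L1_cos[OF m] L1_sin[OF m]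
  have p1: "PB (\<lambda>a b d. ?ck a * ?cl b * ?cm d)" "PB (\<lambda>a b d. ?ck a * ?sl b * ?sm d)"
    "PB (\<lambda>a b d. ?sk a * ?cl b * ?sm d)" "PB (\<lambda>a b d. ?sk a * ?sl b * ?cm d)"
    "PB (\<lambda>a b d. ?sk a * ?cl b * ?cm d)" "PB (\<lambda>a b d. ?ck a * ?sl b * ?cm d)"
    "PB (\<lambda>a b d. ?ck a * ?cl b * ?sm d)" "PB (\<lambda>a b d. ?sk a * ?sl b * ?sm d)"
    by (intro PB_prod L)+
  have e1: "(\<lambda>a b d. cos (of_int k * a + of_int l * b + of_int m * d)) =
    (\<lambda>a b d. ?ck a * ?cl b * ?cm d + ((- 1) * (?ck a * ?sl b * ?sm d) +
       ((- 1) * (?sk a * ?cl b * ?sm d) + (- 1) * (?sk a * ?sl b * ?cm d))))"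
    by (intro ext) (simp only: cos3 sin3)
  show "PB (\<lambda>a b d. cos (of_int k * a + of_int l * b + of_int m * d))"
    unfolding e1 by (intro PB_add PB_scale p1)
  have e2: "(\<lambda>a b d. sin (of_int k * a + of_int l * b + of_int m * d)) =
    (\<lambda>a b d. ?sk a * ?cl b * ?cm d + (?ck a * ?sl b * ?cm d +
       (?ck a * ?cl b * ?sm d + (- 1) * (?sk a * ?sl b * ?sm d))))"
    by (intro ext) (simp only: cos3 sin3)
  show "PB (\<lambda>a b d. sin (of_int k * a + of_int l * b + of_int m * d))"
    unfolding e2 by (intro PB_add PB_scale p1)
qed

lemma sigma_PB: "g \<in> sigma111 \<Longrightarrow> PB g"
proof -
  assume "g \<in> sigma111"
  then obtain q where q: "\<And>a b d. complex_of_real (g a b d) = trig111 q a b d"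
    unfolding sigma111_def by blast
  have "g a b d = Re (trig111 q a b d)" for a b d
    using q[of a b d] by (metis Re_complex_of_real)
  then have eq: "g = (\<lambda>a b d. \<Sum>k\<in>{-1..1}. \<Sum>l\<in>{-1..1}. \<Sum>m\<in>{-1..1}.
      Re (q k l m) * cos (of_int k * a + of_int l * b + of_int m * d)
      + (- Im (q k l m)) * sin (of_int k * a + of_int l * b + of_int m * d))"
    by (auto simp: trig111_def Re_exp Im_exp intro!: ext)
  show ?thesis unfolding eq
    by (intro PB_sum PB_add PB_scale PB_cos_sin) auto
qed


definition ff :: "real \<Rightarrow> real \<Rightarrow> real \<Rightarrow> real" where
  "ff = (\<lambda>\<alpha> \<beta> \<gamma>. 2 powr (3/2) - cos (\<alpha> + \<beta> + \<gamma>) - cos (- \<alpha> + \<beta> + \<gamma>)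
                 - cos (\<alpha> - \<beta> + \<gamma>) + cos (\<alpha> + \<beta> - \<gamma>))"

lemma powr32: "(2::real) powr (3/2) = 2 * sqrt 2"
proof -
  have "(2::real) powr (3/2) = 2 powr (1 + 1/2)" by simp
  also have "\<dots> = 2 powr 1 * 2 powr (1/2)" by (rule powr_add)
  also have "\<dots> = 2 * sqrt 2" by (simp add: powr_half_sqrt)
  finally show ?thesis .
qed

lemma ff_expand: "ff a b d = 2 * sqrt 2 - 2 * (cos a * cos b * cos d - cos a * sin b * sin d
   - sin a * cos b * sin d + sin a * sin b * cos d)"
  unfolding ff_def powr32
  by (simp add: cos_add sin_add cos_diff sin_diff algebra_simps)

definition F :: "nat \<Rightarrow> nat \<Rightarrow> nat \<Rightarrow> real" where
  "F i j k = (if i = 0 \<and> j = 0 \<and> k = 0 then 1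
     else if i = 1 \<and> j = 1 \<and> k = 1 then - 1/4
     else if i = 1 \<and> j = 2 \<and> k = 2 then 1/4
     else if i = 2 \<and> j = 1 \<and> k = 2 then 1/4
     else if i = 2 \<and> j = 2 \<and> k = 1 then - 1/4 else 0)"

lemma ff_G: "ff = G (\<lambda>i j k. 2 * sqrt 2 * F i j k)"
proof (intro ext)
  fix a b d
  have s: "sqrt 2 * (sqrt 2 * x) * (sqrt 2 * y) * (sqrt 2 * z) = 4 * (x * y * z)" for x y z :: real
  proof -
    have "sqrt 2 * (sqrt 2 * x) * (sqrt 2 * y) * (sqrt 2 * z) = (sqrt 2 * sqrt 2) * (sqrt 2 * sqrt 2) * (x * y * z)"
      by (simp only: mult_ac)
    then show ?thesis by simp
  qed
  show "ff a b d = G (\<lambda>i j k. 2 * sqrt 2 * F i j k) a b d"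
    unfolding ff_expand G_def sum3 F_def phi_def by (simp add: s)
qed

lemma ff_nonneg: "ff a b d \<ge> 0"
proof -
  define X where "X = cos (a - b)"
  define Y where "Y = sin (a + b)"
  have br: "cos a * cos b * cos d - cos a * sin b * sin d - sin a * cos b * sin d + sin a * sin b * cos d
     = cos d * X - sin d * Y"
    unfolding X_def Y_def by (simp add: cos_diff sin_add algebra_simps)
  have "(cos d * X - sin d * Y)^2 + (sin d * X + cos d * Y)^2 = (sin d ^2 + cos d ^2) * (X^2 + Y^2)"
    by algebra
  then have "(cos d * X - sin d * Y)^2 \<le> X^2 + Y^2" by simp (smt (verit) zero_le_power2)
  also have "X^2 + Y^2 \<le> 2" unfolding X_def Y_def
    using sin_cos_squared_add[of "a-b"] sin_cos_squared_add[of "a+b"]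
      zero_le_power2[of "sin (a-b)"] zero_le_power2[of "cos (a+b)"] by linarith
  finally have "(cos d * X - sin d * Y)^2 \<le> 2" .
  then have "cos d * X - sin d * Y \<le> sqrt 2"
    using real_le_rsqrt by blast
  then show ?thesis unfolding ff_expand br by simp
qed

definition qf :: "int \<Rightarrow> int \<Rightarrow> int \<Rightarrow> complex" where
  "qf k l m = (if k = 0 \<and> l = 0 \<and> m = 0 then complex_of_real (2 * sqrt 2)
     else if k \<noteq> 0 \<and> l \<noteq> 0 \<and> m \<noteq> 0 then (if k = l \<and> l = - m then 1/2 else - 1/2) else 0)"

lemma int_set3: "{-1..1::int} = {-1, 0, 1}" by auto

lemma ff_trig: "complex_of_real (ff a b d) = trig111 qf a b d"
proof -
  have e: "exp (\<i> * complex_of_real x) = complex_of_real (cos x) + \<i> * complex_of_real (sin x)" for x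
    by (simp add: complex_eq_iff Re_exp Im_exp)
  show ?thesis
    unfolding trig111_def int_set3 e
    by (simp add: qf_def ff_expand complex_eq_iff cos_add sin_add cos_diff sin_diff algebra_simps)
qed

lemma ff_sigma: "ff \<in> sigma111"
  unfolding sigma111_def using ff_trig ff_nonneg by blast


lemma phi_deriv: "(phi i has_real_derivative dphi i t) (at t)"
proof -
  consider "i = 0" | "i = 1" | "i \<noteq> 0 \<and> i \<noteq> 1" by blast
  then show ?thesis
  proof cases
    case 1
    then have "phi i = (\<lambda>t. 1)" by (auto simp: phi_def)
    then show ?thesis using 1 by (simp add: dphi_def)
  next
    case 2
    then have "phi i = (\<lambda>t. sqrt 2 * cos t)" by (auto simp: phi_def)
    then show ?thesis using 2 by (auto simp: dphi_def intro!: derivative_eq_intros)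
  next
    case 3
    then have "phi i = (\<lambda>t. sqrt 2 * sin t)" by (auto simp: phi_def)
    then show ?thesis using 3 by (auto simp: dphi_def intro!: derivative_eq_intros)
  qed
qed

lemma G_d1: "((\<lambda>t. G D t b d) has_real_derivative
   (\<Sum>i<3. \<Sum>j<3. \<Sum>k<3. D i j k * dphi i t * phi j b * phi k d)) (at t)"
  unfolding G_def by (intro DERIV_sum DERIV_cmult_right DERIV_cmult phi_deriv)

lemma G_d2: "((\<lambda>t. G D a t d) has_real_derivative
   (\<Sum>i<3. \<Sum>j<3. \<Sum>k<3. D i j k * phi i a * dphi j t * phi k d)) (at t)"
  unfolding G_def by (intro DERIV_sum DERIV_cmult_right DERIV_cmult phi_deriv)

lemma G_d3: "((\<lambda>t. G D a b t) has_real_derivative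
   (\<Sum>i<3. \<Sum>j<3. \<Sum>k<3. D i j k * phi i a * phi j b * dphi k t)) (at t)"
  unfolding G_def by (intro DERIV_sum DERIV_cmult_right DERIV_cmult phi_deriv)

definition S1 :: "(nat \<Rightarrow> nat \<Rightarrow> nat \<Rightarrow> real) \<Rightarrow> real \<Rightarrow> real \<Rightarrow> real \<Rightarrow> real" where
  "S1 D x y w = (\<Sum>i<3. \<Sum>j<3. \<Sum>k<3. D i j k * dphi i x * phi j y * phi k w)"
definition S2 :: "(nat \<Rightarrow> nat \<Rightarrow> nat \<Rightarrow> real) \<Rightarrow> real \<Rightarrow> real \<Rightarrow> real \<Rightarrow> real" where
  "S2 D x y w = (\<Sum>i<3. \<Sum>j<3. \<Sum>k<3. D i j k * phi i x * dphi j y * phi k w)"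
definition S3 :: "(nat \<Rightarrow> nat \<Rightarrow> nat \<Rightarrow> real) \<Rightarrow> real \<Rightarrow> real \<Rightarrow> real \<Rightarrow> real" where
  "S3 D x y w = (\<Sum>i<3. \<Sum>j<3. \<Sum>k<3. D i j k * phi i x * phi j y * dphi k w)"

lemma zero_conds:
  assumes nn: "\<And>a b d. 0 \<le> G D a b d" and z: "G D x y w = 0"
  shows "(\<Sum>i<3. \<Sum>j<3. \<Sum>k<3. D i j k * dphi i x * phi j y * phi k w) = 0"
    and "(\<Sum>i<3. \<Sum>j<3. \<Sum>k<3. D i j k * phi i x * dphi j y * phi k w) = 0"
    and "(\<Sum>i<3. \<Sum>j<3. \<Sum>k<3. D i j k * phi i x * phi j y * dphi k w) = 0"
proof -
  show "(\<Sum>i<3. \<Sum>j<3. \<Sum>k<3. D i j k * dphi i x * phi j y * phi k w) = 0"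
    by (rule DERIV_local_min[OF G_d1, of 1]) (use nn z in auto)
  show "(\<Sum>i<3. \<Sum>j<3. \<Sum>k<3. D i j k * phi i x * dphi j y * phi k w) = 0"
    by (rule DERIV_local_min[OF G_d2, of 1]) (use nn z in auto)
  show "(\<Sum>i<3. \<Sum>j<3. \<Sum>k<3. D i j k * phi i x * phi j y * dphi k w) = 0"
    by (rule DERIV_local_min[OF G_d3, of 1]) (use nn z in auto)
qed

lemma s22: "sqrt 2 * (sqrt 2 / 2) = (1::real)" by simp

lemma trigv:
  "cos (pi/4) = sqrt 2 / 2" "sin (pi/4) = sqrt 2 / 2"
  "cos (- (pi/4)) = sqrt 2 / 2" "sin (- (pi/4)) = - (sqrt 2 / 2)"
  "cos (3 * pi/4) = - (sqrt 2 / 2)" "sin (3 * pi/4) = sqrt 2 / 2"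
  "cos (- (3 * pi/4)) = - (sqrt 2 / 2)" "sin (- (3 * pi/4)) = - (sqrt 2 / 2)"
proof -
  have e: "3 * pi / 4 = pi - pi/4" by simp
  show "cos (pi/4) = sqrt 2 / 2" "sin (pi/4) = sqrt 2 / 2"
    "cos (- (pi/4)) = sqrt 2 / 2" "sin (- (pi/4)) = - (sqrt 2 / 2)"
    "cos (3 * pi/4) = - (sqrt 2 / 2)" "sin (3 * pi/4) = sqrt 2 / 2"
    "cos (- (3 * pi/4)) = - (sqrt 2 / 2)" "sin (- (3 * pi/4)) = - (sqrt 2 / 2)"
    by (simp_all only: e cos_minus sin_minus cos_45 sin_45 cos_pi_minus sin_pi_minus)
qed

lemma phiv:
  "phi 0 x = 1" "dphi 0 x = 0"
  "phi 1 (pi/4) = 1" "phi 2 (pi/4) = 1" "dphi 1 (pi/4) = -1" "dphi 2 (pi/4) = 1"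
  "phi 1 (- (pi/4)) = 1" "phi 2 (- (pi/4)) = -1" "dphi 1 (- (pi/4)) = 1" "dphi 2 (- (pi/4)) = 1"
  "phi 1 (3*pi/4) = -1" "phi 2 (3*pi/4) = 1" "dphi 1 (3*pi/4) = -1" "dphi 2 (3*pi/4) = -1"
  "phi 1 (- (3*pi/4)) = -1" "phi 2 (- (3*pi/4)) = -1" "dphi 1 (- (3*pi/4)) = 1" "dphi 2 (- (3*pi/4)) = -1"
  by (simp_all add: phi_def dphi_def trigv)

lemmas phiv' = phiv[unfolded One_nat_def]
lemmas phivs = phiv phiv'

lemma ff000: "ff 0 0 0 > 0"
proof -
  have "sqrt 2 > 1" by simp
  then show ?thesis by (simp add: ff_expand)
qed

lemma main:
  assumes gs: "g \<in> sigma111" and le: "\<And>a b d. g a b d \<le> ff a b d"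
  shows "\<exists>c\<ge>0. g = (\<lambda>a b d. c * ff a b d)"
proof -
  obtain D where gD: "g = G D" using sigma_PB[OF gs] unfolding PB_def by blast
  have nn: "\<And>a b d. 0 \<le> G D a b d" using gs gD unfolding sigma111_def by auto
  have le': "\<And>a b d. G D a b d \<le> ff a b d" using le gD by simp
  have Z: "G D x y w = 0 \<and> S1 D x y w = 0 \<and> S2 D x y w = 0 \<and> S3 D x y w = 0"
    if "ff x y w = 0" for x y w
  proof -
    have z: "G D x y w = 0" using nn[of x y w] le'[of x y w] that by simp
    show ?thesis using zero_conds[OF nn z] z unfolding S1_def S2_def S3_def by auto
  qed
  have fz0: "ff (pi/4) (pi/4) (- (pi/4)) = 0"
    unfolding ff_G by (simp add: G_def sum3 phivs F_def)
  have fz1: "ff (pi/4) (- (3*pi/4)) (3*pi/4) = 0"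
    unfolding ff_G by (simp add: G_def sum3 phivs F_def)
  have fz2: "ff (3*pi/4) (3*pi/4) (pi/4) = 0"
    unfolding ff_G by (simp add: G_def sum3 phivs F_def)
  have fz3: "ff (3*pi/4) (- (pi/4)) (- (3*pi/4)) = 0"
    unfolding ff_G by (simp add: G_def sum3 phivs F_def)
  have fz4: "ff (- (3*pi/4)) (pi/4) (3*pi/4) = 0"
    unfolding ff_G by (simp add: G_def sum3 phivs F_def)
  have fz5: "ff (- (3*pi/4)) (- (3*pi/4)) (- (pi/4)) = 0"
    unfolding ff_G by (simp add: G_def sum3 phivs F_def)
  have fz6: "ff (- (pi/4)) (3*pi/4) (- (3*pi/4)) = 0"
    unfolding ff_G by (simp add: G_def sum3 phivs F_def)
  have fz7: "ff (- (pi/4)) (- (pi/4)) (pi/4) = 0"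
    unfolding ff_G by (simp add: G_def sum3 phivs F_def)
  have ZZ: "G D (pi/4) (pi/4) (- (pi/4)) = 0" "S1 D (pi/4) (pi/4) (- (pi/4)) = 0" "S2 D (pi/4) (pi/4) (- (pi/4)) = 0" "S3 D (pi/4) (pi/4) (- (pi/4)) = 0" "G D (pi/4) (- (3*pi/4)) (3*pi/4) = 0" "S1 D (pi/4) (- (3*pi/4)) (3*pi/4) = 0" "S2 D (pi/4) (- (3*pi/4)) (3*pi/4) = 0" "S3 D (pi/4) (- (3*pi/4)) (3*pi/4) = 0" "G D (3*pi/4) (3*pi/4) (pi/4) = 0" "S1 D (3*pi/4) (3*pi/4) (pi/4) = 0" "S2 D (3*pi/4) (3*pi/4) (pi/4) = 0" "S3 D (3*pi/4) (3*pi/4) (pi/4) = 0" "G D (3*pi/4) (- (pi/4)) (- (3*pi/4)) = 0" "S1 D (3*pi/4) (- (pi/4)) (- (3*pi/4)) = 0" "S2 D (3*pi/4) (- (pi/4)) (- (3*pi/4)) = 0" "S3 D (3*pi/4) (- (pi/4)) (- (3*pi/4)) = 0" "G D (- (3*pi/4)) (pi/4) (3*pi/4) = 0" "S1 D (- (3*pi/4)) (pi/4) (3*pi/4) = 0" "S2 D (- (3*pi/4)) (pi/4) (3*pi/4) = 0" "S3 D (- (3*pi/4)) (pi/4) (3*pi/4) = 0" "G D (- (3*pi/4)) (- (3*pi/4)) (- (pi/4)) = 0" "S1 D (- (3*pi/4)) (- (3*pi/4)) (- (pi/4)) = 0" "S2 D (- (3*pi/4)) (- (3*pi/4)) (- (pi/4))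 = 0" "S3 D (- (3*pi/4)) (- (3*pi/4)) (- (pi/4)) = 0" "G D (- (pi/4)) (3*pi/4) (- (3*pi/4)) = 0" "S1 D (- (pi/4)) (3*pi/4) (- (3*pi/4)) = 0" "S2 D (- (pi/4)) (3*pi/4) (- (3*pi/4)) = 0" "S3 D (- (pi/4)) (3*pi/4) (- (3*pi/4)) = 0" "G D (- (pi/4)) (- (pi/4)) (pi/4) = 0" "S1 D (- (pi/4)) (- (pi/4)) (pi/4) = 0" "S2 D (- (pi/4)) (- (pi/4)) (pi/4) = 0" "S3 D (- (pi/4)) (- (pi/4)) (pi/4) = 0"
    using Z[OF fz0] Z[OF fz1] Z[OF fz2] Z[OF fz3] Z[OF fz4] Z[OF fz5] Z[OF fz6] Z[OF fz7] by auto
  note EE = ZZ[unfolded G_def S1_def S2_def S3_def sum3 phivs One_nat_def, simplified]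
  have e001: "D 0 0 (Suc 0) = 0" using EE by argo
  have e002: "D 0 0 2 = 0" using EE by argo
  have e010: "D 0 (Suc 0) 0 = 0" using EE by argo
  have e011: "D 0 (Suc 0) (Suc 0) = 0" using EE by argo
  have e012: "D 0 (Suc 0) 2 = 0" using EE by argo
  have e020: "D 0 2 0 = 0" using EE by argo
  have e021: "D 0 2 (Suc 0) = 0" using EE by argo
  have e022: "D 0 2 2 = 0" using EE by argo
  have e100: "D (Suc 0) 0 0 = 0" using EE by argo
  have e101: "D (Suc 0) 0 (Suc 0) = 0" using EE by argo
  have e102: "D (Suc 0) 0 2 = 0" using EE by argo
  have e110: "D (Suc 0) (Suc 0) 0 = 0" using EE by argo
  have e111: "D (Suc 0) (Suc 0) (Suc 0) = - D 0 0 0 / 4" using EE by argo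
  have e112: "D (Suc 0) (Suc 0) 2 = 0" using EE by argo
  have e120: "D (Suc 0) 2 0 = 0" using EE by argo
  have e121: "D (Suc 0) 2 (Suc 0) = 0" using EE by argo
  have e122: "D (Suc 0) 2 2 = D 0 0 0 / 4" using EE by argo
  have e200: "D 2 0 0 = 0" using EE by argo
  have e201: "D 2 0 (Suc 0) = 0" using EE by argo
  have e202: "D 2 0 2 = 0" using EE by argo
  have e210: "D 2 (Suc 0) 0 = 0" using EE by argo
  have e211: "D 2 (Suc 0) (Suc 0) = 0" using EE by argo
  have e212: "D 2 (Suc 0) 2 = D 0 0 0 / 4" using EE by argo
  have e220: "D 2 2 0 = 0" using EE by argo
  have e221: "D 2 2 (Suc 0) = - D 0 0 0 / 4" using EE by argo
  have e222: "D 2 2 2 = 0" using EE by argo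
  note all = e001 e002 e010 e011 e012 e020 e021 e022 e100 e101 e102 e110 e111 e112 e120 e121 e122 e200 e201 e202 e210 e211 e212 e220 e221 e222
  define d0 where "d0 = D 0 0 0"
  have sol: "D i j k = F i j k * d0" if "i < 3" "j < 3" "k < 3" for i j k
  proof -
    have r: "n < 3 \<Longrightarrow> n = 0 \<or> n = 1 \<or> n = 2" for n :: nat by auto
    show ?thesis using r[OF that(1)] r[OF that(2)] r[OF that(3)]
      by (elim disjE) (use all in \<open>simp_all add: F_def d0_def\<close>)
  qed
  define c where "c = d0 / (2 * sqrt 2)"
  have gc: "g = (\<lambda>a b d. c * ff a b d)"
  proof (intro ext)
    fix a b d
    have "G D a b d = G (\<lambda>i j k. c * (2 * sqrt 2 * F i j k)) a b d"
      unfolding G_def by (intro sum.cong refl) (simp add: sol c_def)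
    also have "\<dots> = c * G (\<lambda>i j k. 2 * sqrt 2 * F i j k) a b d"
      unfolding G_def by (simp add: sum_distrib_left mult_ac)
    finally show "g a b d = c * ff a b d" using gD ff_G by simp
  qed
  have g0: "0 \<le> g 0 0 0" using nn[of 0 0 0] gD by simp
  have "g 0 0 0 = c * ff 0 0 0" by (simp add: gc)
  then have "0 \<le> c * ff 0 0 0" using g0 by simp
  then have "c \<ge> 0" using ff000 by (simp add: zero_le_mult_iff)
  then show ?thesis using gc by blast
qed

theorem proposition7:
  shows "extremal_in sigma111
    (\<lambda>\<alpha> \<beta> \<gamma>. 2 powr (3/2) - cos (\<alpha> + \<beta> + \<gamma>) - cos (- \<alpha> + \<beta> + \<gamma>)
                 - cos (\<alpha> - \<beta> + \<gamma>) + cos (\<alpha> + \<beta> - \<gamma>))"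
proof -
  have eq: "(\<lambda>\<alpha> \<beta> \<gamma>. 2 powr (3/2) - cos (\<alpha> + \<beta> + \<gamma>) - cos (- \<alpha> + \<beta> + \<gamma>)
                 - cos (\<alpha> - \<beta> + \<gamma>) + cos (\<alpha> + \<beta> - \<gamma>)) = ff"
    unfolding ff_def ..
  show ?thesis
    unfolding eq extremal_in_def
  proof (intro conjI allI impI ff_sigma)
    fix g h assume g: "g \<in> sigma111" and h: "h \<in> sigma111"
      and s: "ff = (\<lambda>\<alpha> \<beta> \<gamma>. g \<alpha> \<beta> \<gamma> + h \<alpha> \<beta> \<gamma>)"
    have gn: "g a b d \<ge> 0" and hn: "h a b d \<ge> 0" for a b d
      using g h unfolding sigma111_def by auto
    have sum: "ff a b d = g a b d + h a b d" for a b d by (subst s) (rule refl)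
    have gl: "g a b d \<le> ff a b d" for a b d using sum[of a b d] hn[of a b d] by linarith
    have hl: "h a b d \<le> ff a b d" for a b d using sum[of a b d] gn[of a b d] by linarith
    show "\<exists>c\<ge>0. g = (\<lambda>\<alpha> \<beta> \<gamma>. c * ff \<alpha> \<beta> \<gamma>)"
      using main[OF g gl] by blast
    show "\<exists>d\<ge>0. h = (\<lambda>\<alpha> \<beta> \<gamma>. d * ff \<alpha> \<beta> \<gamma>)"
      using main[OF h hl] by blast
  qed
qed

end
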